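(* Let $w$ be a permutation with $\textsf{supp}(w)=X\sqcup Y$ such that either (1) every $x\in X$ commutes with every $y\in Y$ (i.e. $|x-y|\ne1$), in which case let $s$ be any reduced word of $w$; or (2) there is exactly one pair $(x_0,y_0)\in X\times Y$ of noncommuting letters (i.e. with $|x_0-y_0|=1$), and there is a reduced word $s$ of $w$ in which all occurrences of $x_0$ are to the left of all occurrences of $y_0$. Then the subwords $s_X$ and $s_Y$ of $s$ consisting of all letters from $X$, respectively $Y$, are reduced words, and $B(w)\cong B([s_X])\times B([s_Y])$ as posets.
   Context: $\sigma_i=(i,i+1)$; reduced words are sequences of subscripts of reduced expressions, and $[t]$ denotes the permutation represented by a word $t$. $\textsf{supp}(w)$ is the set of letters appearing in reduced words of $w$. $B(u)$ is the principal order ideal of $u$ in the Bruhat order. *)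

theory Defs
  imports "HOL-Combinatorics.Permutations" "HOL-Combinatorics.Transposition"
begin

text \<open>We work in the symmetric group S_n, realised as the permutations of {1..n}.
  Letters of words are the integers 1..n-1; letter i stands for sigma_i = (i,i+1).\<close>

definition sigma :: "nat \<Rightarrow> nat \<Rightarrow> nat" where
  "sigma i = Transposition.transpose i (Suc i)"

definition word_perm :: "nat list \<Rightarrow> nat \<Rightarrow> nat" where
  "word_perm t = foldr (\<lambda>i p. sigma i \<circ> p) t id"

definition valid_word :: "nat \<Rightarrow> nat list \<Rightarrow> bool" where
  "valid_word n t \<longleftrightarrow> set t \<subseteq> {1..<n}"

definition perm_length :: "nat \<Rightarrow> (nat \<Rightarrow> nat) \<Rightarrow> nat" where
  "perm_length n w = (LEAST k. \<exists>t. valid_word n t \<and> word_perm t = w \<and> length t = k)"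

definition reduced_word :: "nat \<Rightarrow> nat list \<Rightarrow> bool" where
  "reduced_word n t \<longleftrightarrow> valid_word n t \<and> length t = perm_length n (word_perm t)"

definition supp :: "nat \<Rightarrow> (nat \<Rightarrow> nat) \<Rightarrow> nat set" where
  "supp n w = {i. \<exists>t. reduced_word n t \<and> word_perm t = w \<and> i \<in> set t}"

definition bruhat_step :: "nat \<Rightarrow> (nat \<Rightarrow> nat) \<Rightarrow> (nat \<Rightarrow> nat) \<Rightarrow> bool" where
  "bruhat_step n u v \<longleftrightarrow> u permutes {1..n} \<and>
     (\<exists>i j. 1 \<le> i \<and> i < j \<and> j \<le> n \<and> v = u \<circ> Transposition.transpose i j
            \<and> perm_length n u < perm_length n v)"

definition bruhat_le :: "nat \<Rightarrow> (nat \<Rightarrow> nat) \<Rightarrow> (nat \<Rightarrow> nat) \<Rightarrow> bool" where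
  "bruhat_le n = (bruhat_step n)\<^sup>*\<^sup>*"

definition bruhat_ideal :: "nat \<Rightarrow> (nat \<Rightarrow> nat) \<Rightarrow> (nat \<Rightarrow> nat) set" where
  "bruhat_ideal n u = {v. v permutes {1..n} \<and> bruhat_le n v u}"

end

theory Submission
  imports Defs
begin

inductive sub :: "nat list \<Rightarrow> nat list \<Rightarrow> bool" where
  sub_Nil: "sub [] []"
| sub_skip: "sub t s \<Longrightarrow> sub t (c # s)"
| sub_take: "sub t s \<Longrightarrow> sub (c # t) (c # s)"

lemma sub_refl: "sub t t"
  by (induction t) (auto intro: sub.intros)

lemma sub_Nil_any: "sub [] s"
  by (induction s) (auto intro: sub.intros)

lemma sub_set: "sub t s \<Longrightarrow> set t \<subseteq> set s"
  by (induction rule: sub.induct) auto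

lemma sub_length: "sub t s \<Longrightarrow> length t \<le> length s"
  by (induction rule: sub.induct) auto

lemma sub_trans': "sub b c \<Longrightarrow> sub a b \<Longrightarrow> sub a c"
proof (induction b c arbitrary: a rule: sub.induct)
  case sub_Nil
  then show ?case by (auto elim: sub.cases)
next
  case (sub_skip t s c)
  then show ?case by (auto intro: sub.intros)
next
  case (sub_take t s c)
  from sub_take.prems show ?case
    by (cases rule: sub.cases) (auto intro: sub.intros sub_take.IH)
qed

lemma sub_trans: "sub a b \<Longrightarrow> sub b c \<Longrightarrow> sub a c"
  using sub_trans' by blast

lemma sub_append: "sub p s \<Longrightarrow> sub q s' \<Longrightarrow> sub (p @ q) (s @ s')"
  by (induction rule: sub.induct) (auto intro: sub.intros)

lemma sub_Cons_inv: "sub t (c # s) \<Longrightarrow> sub t s \<or> (\<exists>t'. t = c # t' \<and> sub t' s)"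
  by (erule sub.cases) simp_all

lemma sub_append_split: "sub t (s @ s') \<Longrightarrow> \<exists>p q. t = p @ q \<and> sub p s \<and> sub q s'"
proof (induction s arbitrary: t)
  case Nil
  then have h: "t = [] @ t \<and> sub [] [] \<and> sub t s'" by (simp add: sub_Nil)
  show ?case by (rule exI[where x="[]"], rule exI[where x=t]) (rule h)
next
  case (Cons c s)
  from Cons.prems have "sub t (c # (s @ s'))" by simp
  then consider "sub t (s @ s')" | t2 where "t = c # t2" "sub t2 (s @ s')"
    using sub_Cons_inv by meson
  then show ?case
  proof cases
    case 1
    then obtain p q where pq: "t = p @ q" "sub p s" "sub q s'" using Cons.IH by meson
    then have h: "t = p @ q \<and> sub p (c # s) \<and> sub q s'" using sub.sub_skip by simp
    show ?thesis by (rule exI[where x=p], rule exI[where x=q]) (rule h)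
  next
    case (2 t2)
    then obtain p q where "t2 = p @ q" "sub p s" "sub q s'" using Cons.IH by meson
    then have h: "t = (c # p) @ q \<and> sub (c # p) (c # s) \<and> sub q s'" using \<open>t = c # t2\<close> sub.sub_take by simp
    show ?thesis by (rule exI[where x="c # p"], rule exI[where x=q]) (rule h)
  qed
qed

lemma sub_filter: "sub t s \<Longrightarrow> sub (filter P t) (filter P s)"
  by (induction rule: sub.induct) (auto intro: sub.intros)

lemma sub_filter_self: "sub (filter P s) s"
  by (induction s) (auto intro: sub.intros)

definition del :: "nat \<Rightarrow> nat list \<Rightarrow> nat list" where
  "del i t = take i t @ drop (Suc i) t"

lemma sub_del: "sub (del i t) t"
  unfolding del_def
proof (induction t arbitrary: i)
  case Nil then show ?case by (simp add: sub_Nil)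
next
  case (Cons c t) then show ?case
    by (cases i) (auto intro: sub.intros sub_refl)
qed

lemma length_del: "i < length t \<Longrightarrow> length (del i t) = length t - 1"
  unfolding del_def by simp

lemma del_snoc: "i < length t \<Longrightarrow> del i (t @ [c]) = del i t @ [c]"
  unfolding del_def by simp

lemma del_snoc_last: "del (length t) (t @ [c]) = t"
  unfolding del_def by simp

lemma del_Cons_Suc: "del (Suc i) (c # t) = c # del i t"
  unfolding del_def by simp

lemma del_Cons_0: "del 0 (c # t) = t"
  unfolding del_def by simp

lemma word_perm_Nil[simp]: "word_perm [] = id"
  by (simp add: word_perm_def)

lemma word_perm_Cons[simp]: "word_perm (c # t) = sigma c \<circ> word_perm t"
  by (simp add: word_perm_def)

lemma word_perm_append[simp]: "word_perm (t @ t') = word_perm t \<circ> word_perm t'"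
  by (induction t) (auto simp: o_assoc)

lemma sigma_sigma: "sigma i \<circ> sigma i = id"
  by (simp add: sigma_def)

lemma sigma_sigma_apply[simp]: "sigma i (sigma i x) = x"
  by (simp add: sigma_def)

lemma sigma_permutes: "1 \<le> i \<Longrightarrow> i < n \<Longrightarrow> sigma i permutes {1..n}"
  unfolding sigma_def by (rule permutes_swap_id) auto

lemma valid_Cons[simp]: "valid_word n (c # t) \<longleftrightarrow> c \<in> {1..<n} \<and> valid_word n t"
  by (auto simp: valid_word_def)

lemma valid_append[simp]: "valid_word n (t @ t') \<longleftrightarrow> valid_word n t \<and> valid_word n t'"
  by (auto simp: valid_word_def)

lemma valid_Nil[simp]: "valid_word n []"
  by (auto simp: valid_word_def)

lemma valid_sub: "sub t s \<Longrightarrow> valid_word n s \<Longrightarrow> valid_word n t"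
  using sub_set unfolding valid_word_def by blast

lemma word_perm_permutes: "valid_word n t \<Longrightarrow> word_perm t permutes {1..n}"
proof (induction t)
  case Nil show ?case unfolding word_perm_Nil by (rule permutes_id)
next
  case (Cons c t)
  then have "word_perm t permutes {1..n}" "sigma c permutes {1..n}" using sigma_permutes[of c n] by auto
  then show ?case unfolding word_perm_Cons by (rule permutes_compose)
qed

lemma word_perm_bij: "bij (word_perm t)"
proof (induction t)
  case Nil show ?case unfolding word_perm_Nil by (rule bij_id)
next
  case (Cons c t) show ?case unfolding word_perm_Cons sigma_def by (rule bij_comp[OF Cons.IH bij_transpose])
qed

lemma word_perm_evenperm: "evenperm (word_perm t) \<longleftrightarrow> even (length t)"
proof (induction t)
  case Nil then show ?case by simp
next
  case (Cons c t)
  have pt: "permutation (word_perm t)"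
  proof (induction t)
    case Nil show ?case unfolding word_perm_Nil by (rule permutation_id)
  next
    case (Cons d t) then show ?case
      unfolding word_perm_Cons sigma_def by (intro permutation_compose permutation_swap_id)
  qed
  have "evenperm (sigma c \<circ> word_perm t) \<longleftrightarrow> evenperm (sigma c) = evenperm (word_perm t)"
    by (rule evenperm_comp) (simp_all add: sigma_def permutation_swap_id pt)
  moreover have e: "evenperm (sigma c) = False" by (simp add: sigma_def evenperm_swap)
  ultimately show ?case using Cons.IH unfolding word_perm_Cons length_Cons even_Suc by blast
qed

lemma conj_transpose: "a < b \<Longrightarrow> sigma b \<circ> Transposition.transpose a b \<circ> sigma b = Transposition.transpose a (Suc b)"
proof
  fix x assume "a < b"
  show "(sigma b \<circ> Transposition.transpose a b \<circ> sigma b) x = Transposition.transpose a (Suc b) x"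
    using \<open>a < b\<close> unfolding sigma_def transpose_def o_apply by simp
qed

lemma transpose_repr:
  assumes "1 \<le> a" "a < b" "b \<le> n"
  shows "\<exists>t. valid_word n t \<and> word_perm t = Transposition.transpose a b"
  using assms
proof (induction b)
  case 0 then show ?case by simp
next
  case (Suc b)
  show ?case
  proof (cases "a = b")
    case True
    have "word_perm [a] = Transposition.transpose a (Suc b)" using True
      unfolding word_perm_Cons word_perm_Nil sigma_def by simp
    moreover have "valid_word n [a]" using Suc.prems True by simp
    ultimately show ?thesis by blast
  next
    case False
    then have "a < b" using Suc.prems by simp
    have "\<exists>t. valid_word n t \<and> word_perm t = Transposition.transpose a b"
      by (rule Suc.IH) (use Suc.prems \<open>a < b\<close> in auto)
    then obtain t where t: "valid_word n t" "word_perm t = Transposition.transpose a b"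
      by blast
    have "sigma b \<circ> Transposition.transpose a b \<circ> sigma b = Transposition.transpose a (Suc b)"
      using \<open>a < b\<close> by (rule conj_transpose)
    moreover have "word_perm (b # t @ [b]) = sigma b \<circ> Transposition.transpose a b \<circ> sigma b"
      using t by (simp add: o_assoc)
    moreover have "valid_word n (b # t @ [b])" using t Suc.prems \<open>a < b\<close> by simp
    ultimately show ?thesis by metis
  qed
qed

lemma permutes_repr:
  assumes "p permutes {1..n}"
  shows "\<exists>t. valid_word n t \<and> word_perm t = p"
  using assms finite_atLeastAtMost
proof (induction rule: permutes_induct)
  case id
  then show ?case by (intro exI[of _ "[]"]) auto
next
  case (swap a b p)
  then obtain t where t: "valid_word n t" "word_perm t = p" by blast
  have ab: "1 \<le> a" "a \<le> n" "1 \<le> b" "b \<le> n" "a \<noteq> b" using swap.hyps by auto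
  obtain t' where t': "valid_word n t'" "word_perm t' = Transposition.transpose a b"
  proof (cases "a < b")
    case True then show ?thesis using transpose_repr[of a b n] ab that by blast
  next
    case False then have "b < a" using ab by auto
    then show ?thesis using transpose_repr[of b a n] ab that transpose_commute[of a b] by metis
  qed
  then have "word_perm (t' @ t) = Transposition.transpose a b \<circ> p" "valid_word n (t' @ t)"
    using t by simp_all
  then show ?case by blast
qed


lemma word_perm_single[simp]: "word_perm [c] = sigma c"
  by simp

lemma pl_le:
  assumes "valid_word n t"
  shows "perm_length n (word_perm t) \<le> length t"
proof -
  have "\<exists>t'. valid_word n t' \<and> word_perm t' = word_perm t \<and> length t' = length t"
    by (rule exI[where x=t]) (simp add: assms)
  then show ?thesis unfolding perm_length_def by (rule Least_le)
qed

lemma pl_ex: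
  assumes "valid_word n t0" "word_perm t0 = x"
  shows "\<exists>t. valid_word n t \<and> word_perm t = x \<and> length t = perm_length n x"
proof -
  let ?P = "\<lambda>k. \<exists>t. valid_word n t \<and> word_perm t = x \<and> length t = k"
  have "?P (length t0)"
    by (rule exI[where x=t0]) (simp add: assms)
  then have "?P (Least ?P)" by (rule LeastI[where P = ?P])
  then show ?thesis unfolding perm_length_def .
qed

lemma pl_ex_perm:
  assumes "x permutes {1..n}"
  shows "\<exists>t. valid_word n t \<and> word_perm t = x \<and> length t = perm_length n x"
proof -
  obtain t0 where "valid_word n t0" "word_perm t0 = x" using permutes_repr[OF assms] by blast
  then show ?thesis by (rule pl_ex)
qed

lemma evenperm_pl:
  assumes "x permutes {1..n}"
  shows "evenperm x \<longleftrightarrow> even (perm_length n x)"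
proof -
  obtain t where t: "valid_word n t" "word_perm t = x" "length t = perm_length n x"
    using pl_ex_perm[OF assms] by blast
  show ?thesis using word_perm_evenperm[of t] t by simp
qed

lemma pl_transpose_neq:
  assumes "u permutes {1..n}" "a \<in> {1..n}" "b \<in> {1..n}" "a \<noteq> b"
  shows "perm_length n (u \<circ> Transposition.transpose a b) \<noteq> perm_length n u"
proof
  assume eq: "perm_length n (u \<circ> Transposition.transpose a b) = perm_length n u"
  have p1: "u \<circ> Transposition.transpose a b permutes {1..n}"
    by (rule permutes_compose[OF permutes_swap_id[OF assms(2,3)] assms(1)])
  have pu: "permutation u" using assms(1) permutation_permutes by blast
  have "evenperm (u \<circ> Transposition.transpose a b) \<longleftrightarrow> evenperm u = evenperm (Transposition.transpose a b)"
    by (rule evenperm_comp[OF pu permutation_swap_id])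
  then have "evenperm (u \<circ> Transposition.transpose a b) \<longleftrightarrow> \<not> evenperm u"
    using assms(4) by (simp add: evenperm_swap)
  then show False using evenperm_pl[OF p1] evenperm_pl[OF assms(1)] eq by simp
qed

lemma pl_sigma_le:
  assumes "x permutes {1..n}" "1 \<le> c" "c < n"
  shows "perm_length n (sigma c \<circ> x) \<le> perm_length n x + 1"
proof -
  obtain t where t: "valid_word n t" "word_perm t = x" "length t = perm_length n x"
    using pl_ex_perm[OF assms(1)] by blast
  have "valid_word n (c # t)" using t assms by simp
  then have "perm_length n (word_perm (c # t)) \<le> length (c # t)" by (rule pl_le)
  then show ?thesis using t by simp
qed

lemma sigma_order:
  assumes "a < b" "\<not> (a = c \<and> b = Suc c)"
  shows "sigma c a < sigma c b"
  using assms unfolding sigma_def transpose_def by (simp, presburger)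

lemma sigma_conj:
  "sigma c \<circ> Transposition.transpose a b = Transposition.transpose (sigma c a) (sigma c b) \<circ> sigma c"
proof -
  have "Transposition.transpose (sigma c a) (sigma c b) \<circ> sigma c
      = sigma c \<circ> Transposition.transpose (inv (sigma c) (sigma c a)) (inv (sigma c) (sigma c b))"
    unfolding sigma_def by (rule transpose_comp_eq) simp
  also have "inv (sigma c) = sigma c" unfolding sigma_def by simp
  finally show ?thesis by (simp add: fun_eq_iff)
qed

lemma exchange:
  assumes "a < b" "word_perm t b < word_perm t a"
  shows "\<exists>i<length t. word_perm t \<circ> Transposition.transpose a b = word_perm (del i t)"
  using assms
proof (induction t arbitrary: a b rule: rev_induct)
  case Nil
  then show ?case by simp
next
  case (snoc c t)
  let ?v = "word_perm t"
  have v: "word_perm (t @ [c]) = ?v \<circ> sigma c" by simp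
  show ?case
  proof (cases "a = c \<and> b = Suc c")
    case True
    have "word_perm (t @ [c]) \<circ> Transposition.transpose a b = ?v"
      using True by (simp add: v sigma_def o_assoc[symmetric])
    also have "?v = word_perm (del (length t) (t @ [c]))" by (simp add: del_snoc_last)
    finally have F: "word_perm (t @ [c]) \<circ> Transposition.transpose a b = word_perm (del (length t) (t @ [c]))" .
    have L: "length t < length (t @ [c])" by simp
    show ?thesis using L F by blast
  next
    case False
    have lt: "sigma c a < sigma c b" by (rule sigma_order[OF snoc.prems(1) False])
    have "?v (sigma c b) < ?v (sigma c a)" using snoc.prems(2) by simp
    then obtain i where i: "i < length t" "?v \<circ> Transposition.transpose (sigma c a) (sigma c b) = word_perm (del i t)"
      using snoc.IH[OF lt] by blast
    have "word_perm (t @ [c]) \<circ> Transposition.transpose a b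
        = ?v \<circ> (sigma c \<circ> Transposition.transpose a b)" by (simp add: v o_assoc)
    also have "\<dots> = ?v \<circ> Transposition.transpose (sigma c a) (sigma c b) \<circ> sigma c"
      by (simp add: sigma_conj o_assoc)
    also have "\<dots> = word_perm (del i t @ [c])" using i by simp
    also have "\<dots> = word_perm (del i (t @ [c]))" using i by (simp add: del_snoc)
    finally have "word_perm (t @ [c]) \<circ> Transposition.transpose a b = word_perm (del i (t @ [c]))" .
    moreover have "i < length (t @ [c])" using i by simp
    ultimately show ?thesis by blast
  qed
qed


lemma desc_imp:
  assumes "x permutes {1..n}" "a < b" "x b < x a"
  shows "perm_length n (x \<circ> Transposition.transpose a b) < perm_length n x"
proof -
  obtain t where t: "valid_word n t" "word_perm t = x" "length t = perm_length n x"
    using pl_ex_perm[OF assms(1)] by blast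
  obtain i where i: "i < length t" "x \<circ> Transposition.transpose a b = word_perm (del i t)"
    using exchange[of a b t] assms t by blast
  have "valid_word n (del i t)" by (rule valid_sub[OF sub_del t(1)])
  then have "perm_length n (word_perm (del i t)) \<le> length (del i t)" by (rule pl_le)
  then show ?thesis using i t length_del[OF i(1)] by simp
qed

lemma pl_transpose_less:
  assumes "x permutes {1..n}" "a < b" "1 \<le> a" "b \<le> n"
  shows "perm_length n (x \<circ> Transposition.transpose a b) < perm_length n x \<longleftrightarrow> x b < x a"
proof
  assume "x b < x a" then show "perm_length n (x \<circ> Transposition.transpose a b) < perm_length n x"
    by (rule desc_imp[OF assms(1,2)])
next
  assume lt: "perm_length n (x \<circ> Transposition.transpose a b) < perm_length n x"
  show "x b < x a"
  proof (rule ccontr)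
    assume "\<not> x b < x a"
    moreover have "x a \<noteq> x b" using permutes_inj[OF assms(1)] assms(2) by (metis inj_eq less_irrefl)
    ultimately have "x a < x b" by simp
    let ?y = "x \<circ> Transposition.transpose a b"
    have py: "?y permutes {1..n}"
      by (rule permutes_compose[OF permutes_swap_id assms(1)]) (use assms in auto)
    have "?y b < ?y a" using \<open>x a < x b\<close> by simp
    then have "perm_length n (?y \<circ> Transposition.transpose a b) < perm_length n ?y"
      by (rule desc_imp[OF py assms(2)])
    moreover have "?y \<circ> Transposition.transpose a b = x"
      by (simp add: o_assoc[symmetric])
    ultimately show False using lt by simp
  qed
qed

lemma reduced_Nil: "reduced_word n []"
proof -
  have "perm_length n (word_perm []) \<le> 0" using pl_le[of n "[]"] by simp
  then show ?thesis unfolding reduced_word_def by simp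
qed

lemma shorter:
  assumes "valid_word n p" "\<not> reduced_word n p"
  shows "\<exists>r. sub r p \<and> length r < length p \<and> word_perm r = word_perm p"
  using assms
proof (induction p rule: rev_induct)
  case Nil
  then show ?case using reduced_Nil by blast
next
  case (snoc c p)
  have vp: "valid_word n p" and c: "1 \<le> c" "c < n" using snoc.prems by auto
  show ?case
  proof (cases "reduced_word n p")
    case False
    then obtain r where r: "sub r p" "length r < length p" "word_perm r = word_perm p"
      using snoc.IH vp by blast
    have "sub (r @ [c]) (p @ [c])" by (rule sub_append[OF r(1) sub_refl])
    moreover have "length (r @ [c]) < length (p @ [c])" using r by simp
    moreover have "word_perm (r @ [c]) = word_perm (p @ [c])" using r by simp
    ultimately show ?thesis by blast
  next
    case True
    let ?x = "word_perm p"
    have px: "?x permutes {1..n}" by (rule word_perm_permutes[OF vp])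
    have plx: "perm_length n ?x = length p" using True unfolding reduced_word_def by simp
    have e: "word_perm (p @ [c]) = ?x \<circ> Transposition.transpose c (Suc c)"
      by (simp add: sigma_def)
    have "perm_length n (word_perm (p @ [c])) \<le> length (p @ [c])"
      by (rule pl_le) (use snoc.prems in simp)
    moreover have "perm_length n (word_perm (p @ [c])) \<noteq> length (p @ [c])"
      using snoc.prems unfolding reduced_word_def by simp
    moreover have "perm_length n (?x \<circ> Transposition.transpose c (Suc c)) \<noteq> perm_length n ?x"
      by (rule pl_transpose_neq[OF px]) (use c in auto)
    ultimately have "perm_length n (?x \<circ> Transposition.transpose c (Suc c)) < perm_length n ?x"
      using plx e by simp
    then have "?x (Suc c) < ?x c"
      using pl_transpose_less[OF px, of c "Suc c"] c by simp
    then obtain i where i: "i < length p" "?x \<circ> Transposition.transpose c (Suc c) = word_perm (del i p)"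
      using exchange[of c "Suc c" p] by auto
    have "sub (del i p) (p @ [c])"
      by (rule sub_trans[OF sub_del]) (rule sub_append[OF sub_refl sub_Nil_any, of p "[c]", simplified])
    moreover have "length (del i p) < length (p @ [c])" using length_del[OF i(1)] by simp
    moreover have "word_perm (del i p) = word_perm (p @ [c])" using i e by simp
    ultimately show ?thesis by blast
  qed
qed

lemma deletion:
  assumes "valid_word n p"
  shows "\<exists>r. sub r p \<and> reduced_word n r \<and> word_perm r = word_perm p"
  using assms
proof (induction "length p" arbitrary: p rule: less_induct)
  case less
  show ?case
  proof (cases "reduced_word n p")
    case True
    then show ?thesis using sub_refl by blast
  next
    case False
    then obtain r1 where r1: "sub r1 p" "length r1 < length p" "word_perm r1 = word_perm p"
      using shorter less.prems by blast
    have "valid_word n r1" by (rule valid_sub[OF r1(1) less.prems])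
    then obtain r where r: "sub r r1" "reduced_word n r" "word_perm r = word_perm r1"
      using less.hyps[OF r1(2)] by blast
    have "sub r p" by (rule sub_trans[OF r(1) r1(1)])
    then show ?thesis using r r1 by auto
  qed
qed

lemma reduced_tail:
  assumes "reduced_word n (c # s)"
  shows "reduced_word n s"
proof -
  have v: "valid_word n s" "1 \<le> c" "c < n" using assms unfolding reduced_word_def by auto
  have l: "length (c # s) = perm_length n (word_perm (c # s))"
    using assms unfolding reduced_word_def by simp
  have le: "perm_length n (word_perm s) \<le> length s" by (rule pl_le[OF v(1)])
  obtain r where r: "valid_word n r" "word_perm r = word_perm s" "length r = perm_length n (word_perm s)"
    using pl_ex[OF v(1) refl] by blast
  have "valid_word n (c # r)" using r v by simp
  then have "perm_length n (word_perm (c # r)) \<le> length (c # r)" by (rule pl_le)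
  then have "length s \<le> length r" using l r by simp
  then show ?thesis using le r v unfolding reduced_word_def by simp
qed


lemma bruhat_le_refl: "bruhat_le n u u"
  unfolding bruhat_le_def by simp

lemma bruhat_le_trans: "bruhat_le n u v \<Longrightarrow> bruhat_le n v w \<Longrightarrow> bruhat_le n u w"
  unfolding bruhat_le_def by (rule rtranclp_trans)

lemma step_le: "bruhat_step n u v \<Longrightarrow> bruhat_le n u v"
  unfolding bruhat_le_def by (rule r_into_rtranclp)

lemma sigma_sigma_comp: "sigma c \<circ> (sigma c \<circ> x) = x"
  by (simp add: fun_eq_iff)

lemma Z_step:
  assumes st: "bruhat_step n u w" and c: "1 \<le> c" "c < n"
  shows "bruhat_le n (sigma c \<circ> u) w \<or> bruhat_le n (sigma c \<circ> u) (sigma c \<circ> w)"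
proof -
  from st obtain i j where pu: "u permutes {1..n}" and ij: "1 \<le> i" "i < j" "j \<le> n"
    and w: "w = u \<circ> Transposition.transpose i j" and lt: "perm_length n u < perm_length n w"
    unfolding bruhat_step_def by blast
  let ?s = "sigma c"
  have ps: "?s permutes {1..n}" by (rule sigma_permutes[OF c])
  have pw: "w permutes {1..n}" unfolding w
    by (rule permutes_compose[OF permutes_swap_id pu]) (use ij in auto)
  have psu: "?s \<circ> u permutes {1..n}" by (rule permutes_compose[OF pu ps])
  have psw: "?s \<circ> w permutes {1..n}" by (rule permutes_compose[OF pw ps])
  have sw: "?s \<circ> w = (?s \<circ> u) \<circ> Transposition.transpose i j" unfolding w by (simp add: o_assoc)
  show ?thesis
  proof (cases "perm_length n (?s \<circ> u) < perm_length n (?s \<circ> w)")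
    case True
    have "bruhat_step n (?s \<circ> u) (?s \<circ> w)"
      unfolding bruhat_step_def using psu ij sw True by blast
    then show ?thesis using step_le by blast
  next
    case False
    have "perm_length n ((?s \<circ> u) \<circ> Transposition.transpose i j) \<noteq> perm_length n (?s \<circ> u)"
      by (rule pl_transpose_neq[OF psu]) (use ij in auto)
    then have l1: "perm_length n (?s \<circ> w) < perm_length n (?s \<circ> u)" using False sw by simp
    have l2: "perm_length n (?s \<circ> u) \<le> perm_length n u + 1" by (rule pl_sigma_le[OF pu c])
    have "perm_length n (?s \<circ> (?s \<circ> w)) \<le> perm_length n (?s \<circ> w) + 1" by (rule pl_sigma_le[OF psw c])
    then have l3: "perm_length n w \<le> perm_length n (?s \<circ> w) + 1" by (simp add: sigma_sigma_comp)
    have e1: "perm_length n w = perm_length n (?s \<circ> w) + 1" using l1 l2 l3 lt by linarith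
    have e2: "perm_length n (?s \<circ> u) = perm_length n w" using l1 l2 l3 lt by linarith
    obtain r where r: "valid_word n r" "word_perm r = ?s \<circ> w" "length r = perm_length n (?s \<circ> w)"
      using pl_ex_perm[OF psw] by blast
    have wcr: "word_perm (c # r) = w" using r by (simp add: sigma_sigma_comp)
    have wu: "w \<circ> Transposition.transpose i j = u" unfolding w by (simp add: o_assoc[symmetric])
    have "w j < w i" using pl_transpose_less[OF pw ij(2) ij(1) ij(3)] lt wu by simp
    then obtain k where k: "k < length (c # r)" "word_perm (c # r) \<circ> Transposition.transpose i j = word_perm (del k (c # r))"
      using exchange[of i j "c # r"] ij wcr by auto
    have uk: "u = word_perm (del k (c # r))" using k(2) wcr wu by simp
    show ?thesis
    proof (cases k)
      case 0
      then have "u = ?s \<circ> w" using uk r by (simp add: del_Cons_0)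
      then have "?s \<circ> u = w" by (simp add: sigma_sigma_comp)
      then show ?thesis using bruhat_le_refl by simp
    next
      case (Suc k')
      then have "u = ?s \<circ> word_perm (del k' r)" using uk by (simp add: del_Cons_Suc)
      then have "?s \<circ> u = word_perm (del k' r)" by (simp add: sigma_sigma_comp)
      moreover have "valid_word n (del k' r)" by (rule valid_sub[OF sub_del r(1)])
      ultimately have "perm_length n (?s \<circ> u) \<le> length (del k' r)" using pl_le by metis
      moreover have "length (del k' r) = length r - 1" using k Suc by (simp add: length_del)
      ultimately show ?thesis using e1 e2 r(3) by linarith
    qed
  qed
qed

lemma Z:
  assumes "bruhat_le n u w" "1 \<le> c" "c < n"
  shows "bruhat_le n (sigma c \<circ> u) w \<or> bruhat_le n (sigma c \<circ> u) (sigma c \<circ> w)"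
  using assms(1) unfolding bruhat_le_def
proof (induction rule: rtranclp_induct)
  case base
  then show ?case by simp
next
  case (step v z)
  have vw: "bruhat_le n v z" using step.hyps(2) by (rule step_le)
  from Z_step[OF step.hyps(2) assms(2,3)]
  have h: "bruhat_le n (sigma c \<circ> v) z \<or> bruhat_le n (sigma c \<circ> v) (sigma c \<circ> z)" .
  from step.IH show ?case
  proof
    assume "(bruhat_step n)\<^sup>*\<^sup>* (sigma c \<circ> u) v"
    then have "bruhat_le n (sigma c \<circ> u) z" using vw unfolding bruhat_le_def by (rule rtranclp_trans)
    then show ?case unfolding bruhat_le_def by (rule disjI1)
  next
    assume a: "(bruhat_step n)\<^sup>*\<^sup>* (sigma c \<circ> u) (sigma c \<circ> v)"
    from h show ?case
    proof
      assume "bruhat_le n (sigma c \<circ> v) z"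
      then show ?case using a unfolding bruhat_le_def by (metis rtranclp_trans)
    next
      assume "bruhat_le n (sigma c \<circ> v) (sigma c \<circ> z)"
      then show ?case using a unfolding bruhat_le_def by (metis rtranclp_trans)
    qed
  qed
qed

lemma subword_le:
  assumes "reduced_word n s" "sub t s"
  shows "bruhat_le n (word_perm t) (word_perm s)"
  using assms
proof (induction s arbitrary: t)
  case Nil
  then have "t = []" by (auto elim: sub.cases)
  then show ?case by (simp add: bruhat_le_refl)
next
  case (Cons c s')
  have rs: "reduced_word n s'" by (rule reduced_tail[OF Cons.prems(1)])
  have vs: "valid_word n s'" "1 \<le> c" "c < n" using Cons.prems(1) unfolding reduced_word_def by auto
  let ?w' = "word_perm s'"
  have pw': "?w' permutes {1..n}" by (rule word_perm_permutes[OF vs(1)])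
  have step: "bruhat_step n ?w' (word_perm (c # s'))"
  proof -
    let ?p = "inv ?w' c" and ?q = "inv ?w' (Suc c)"
    have pinv: "inv ?w' permutes {1..n}" by (rule permutes_inv[OF pw'])
    have pq: "?p \<in> {1..n}" "?q \<in> {1..n}" using permutes_in_image[OF pinv] vs by auto
    have "?p \<noteq> ?q" using permutes_inj[OF pinv] by (metis inj_eq n_not_Suc_n)
    have eq: "word_perm (c # s') = ?w' \<circ> Transposition.transpose ?p ?q"
      unfolding word_perm_Cons sigma_def by (rule transpose_comp_eq[OF permutes_bij[OF pw']])
    have lt: "perm_length n ?w' < perm_length n (word_perm (c # s'))"
      using pl_le[OF vs(1)] Cons.prems(1) unfolding reduced_word_def by simp
    show ?thesis
    proof (cases "?p < ?q")
      case True
      then show ?thesis unfolding bruhat_step_def using pw' pq eq lt by auto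
    next
      case False
      then have "?q < ?p" using \<open>?p \<noteq> ?q\<close> by simp
      moreover have "word_perm (c # s') = ?w' \<circ> Transposition.transpose ?q ?p"
        using eq by (simp add: transpose_commute)
      ultimately show ?thesis unfolding bruhat_step_def using pw' pq lt by auto
    qed
  qed
  then have le1: "bruhat_le n ?w' (word_perm (c # s'))" by (rule step_le)
  from sub_Cons_inv[OF Cons.prems(2)]
  show ?case
  proof
    assume "sub t s'"
    then have "bruhat_le n (word_perm t) ?w'" by (rule Cons.IH[OF rs])
    then show ?case using le1 by (rule bruhat_le_trans)
  next
    assume "\<exists>t'. t = c # t' \<and> sub t' s'"
    then obtain t' where t': "t = c # t'" "sub t' s'" by blast
    have "bruhat_le n (word_perm t') ?w'" by (rule Cons.IH[OF rs t'(2)])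
    from Z[OF this vs(2,3)]
    show ?case
    proof
      assume "bruhat_le n (sigma c \<circ> word_perm t') ?w'"
      then have "bruhat_le n (sigma c \<circ> word_perm t') (word_perm (c # s'))" using le1 by (rule bruhat_le_trans)
      then show ?case unfolding t'(1) word_perm_Cons .
    next
      assume "bruhat_le n (sigma c \<circ> word_perm t') (sigma c \<circ> ?w')"
      then show ?case unfolding t'(1) word_perm_Cons .
    qed
  qed
qed

lemma le_subword:
  assumes "bruhat_le n u w" "valid_word n s" "word_perm s = w"
  shows "\<exists>t. sub t s \<and> word_perm t = u"
  using assms(1) unfolding bruhat_le_def
proof (induction rule: converse_rtranclp_induct)
  case base
  show ?case using sub_refl assms(3) by blast
next
  case (step u v)
  then obtain t where t: "sub t s" "word_perm t = v" by blast
  from step.hyps(1) obtain i j where pu: "u permutes {1..n}" and ij: "1 \<le> i" "i < j" "j \<le> n"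
    and v: "v = u \<circ> Transposition.transpose i j" and lt: "perm_length n u < perm_length n v"
    unfolding bruhat_step_def by blast
  have pv: "v permutes {1..n}" unfolding v
    by (rule permutes_compose[OF permutes_swap_id pu]) (use ij in auto)
  have vu: "v \<circ> Transposition.transpose i j = u" unfolding v by (simp add: o_assoc[symmetric])
  have "v j < v i" using pl_transpose_less[OF pv ij(2) ij(1) ij(3)] lt vu by simp
  then obtain k where k: "k < length t" "word_perm t \<circ> Transposition.transpose i j = word_perm (del k t)"
    using exchange[of i j t] ij t by auto
  have "sub (del k t) s" by (rule sub_trans[OF sub_del t(1)])
  moreover have "word_perm (del k t) = u" using k t vu by simp
  ultimately show ?case by blast
qed


definition conn :: "nat set \<Rightarrow> nat \<Rightarrow> nat \<Rightarrow> bool" where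
  "conn X k m \<longleftrightarrow> (\<forall>j. min k m \<le> j \<and> j < max k m \<longrightarrow> j \<in> X)"

lemma conn_trans:
  assumes "conn X k m" "conn X m z"
  shows "conn X k z"
  unfolding conn_def
proof (intro allI impI)
  fix j assume j: "min k z \<le> j \<and> j < max k z"
  then have "(min k m \<le> j \<and> j < max k m) \<or> (min m z \<le> j \<and> j < max m z)" by arith
  then show "j \<in> X" using assms unfolding conn_def by blast
qed

lemma conn_sym: "conn X k m \<longleftrightarrow> conn X m k"
  unfolding conn_def by (simp add: min.commute max.commute)

lemma conn_sigma: "c \<in> X \<Longrightarrow> conn X m (sigma c m)"
  unfolding conn_def sigma_def transpose_def by (auto simp: le_less_Suc_eq)

lemma conn_word: "set p \<subseteq> X \<Longrightarrow> conn X k (word_perm p k)"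
proof (induction p)
  case Nil
  show ?case unfolding conn_def by auto
next
  case (Cons c p)
  have "conn X k (word_perm p k)" using Cons by simp
  moreover have "conn X (word_perm p k) (sigma c (word_perm p k))"
    by (rule conn_sigma) (use Cons.prems in simp)
  ultimately have "conn X k (sigma c (word_perm p k))" by (rule conn_trans)
  then show ?case by simp
qed

lemma unique_fact:
  assumes "set p \<subseteq> X" "set p' \<subseteq> X" "set q \<subseteq> Y" "set q' \<subseteq> Y" "X \<inter> Y = {}"
    and eq: "word_perm p \<circ> word_perm q = word_perm p' \<circ> word_perm q'"
  shows "word_perm p = word_perm p' \<and> word_perm q = word_perm q'"
proof -
  have bq: "word_perm q k = word_perm q' k" for k
  proof (rule ccontr)
    let ?m = "word_perm q k" and ?m' = "word_perm q' k"
    assume ne: "?m \<noteq> ?m'"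
    have "conn Y k ?m" "conn Y k ?m'" using conn_word assms(3,4) by auto
    then have cY: "conn Y ?m ?m'" using conn_trans conn_sym by blast
    have z: "word_perm p ?m = word_perm p' ?m'" using fun_cong[OF eq, of k] by simp
    have "conn X ?m (word_perm p ?m)" "conn X ?m' (word_perm p' ?m')" using conn_word assms(1,2) by auto
    then have cX: "conn X ?m ?m'" using z conn_trans conn_sym by metis
    have "min ?m ?m' \<le> min ?m ?m' \<and> min ?m ?m' < max ?m ?m'" using ne by simp
    then have "min ?m ?m' \<in> X" "min ?m ?m' \<in> Y" using cX cY unfolding conn_def by blast+
    then show False using assms(5) by blast
  qed
  then have qq: "word_perm q = word_perm q'" by (rule ext)
  have "word_perm p x = word_perm p' x" for x
  proof -
    obtain y where "x = word_perm q y" using bij_is_surj[OF word_perm_bij[of q]] by (metis surj_f_inv_f)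
    then show ?thesis using fun_cong[OF eq, of y] qq by simp
  qed
  then have "word_perm p = word_perm p'" by (rule ext)
  then show ?thesis using qq by simp
qed

lemma sigma_comm:
  assumes "a \<noteq> b" "a \<noteq> Suc b" "b \<noteq> Suc a"
  shows "sigma a \<circ> sigma b = sigma b \<circ> sigma a"
  using assms by (simp add: fun_eq_iff sigma_def transpose_def)

lemma comm_word:
  assumes "\<forall>x\<in>set p. x \<noteq> c \<and> x \<noteq> Suc c \<and> c \<noteq> Suc x"
  shows "sigma c \<circ> word_perm p = word_perm p \<circ> sigma c"
  using assms
proof (induction p)
  case Nil
  show ?case by simp
next
  case (Cons d p)
  have h1: "sigma c \<circ> sigma d = sigma d \<circ> sigma c" by (rule sigma_comm) (use Cons.prems in auto)
  have h2: "sigma c \<circ> word_perm p = word_perm p \<circ> sigma c" by (rule Cons.IH) (use Cons.prems in simp)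
  have "sigma c \<circ> (sigma d \<circ> word_perm p) = (sigma c \<circ> sigma d) \<circ> word_perm p" by (rule comp_assoc[symmetric])
  also have "\<dots> = (sigma d \<circ> sigma c) \<circ> word_perm p" by (simp only: h1)
  also have "\<dots> = sigma d \<circ> (sigma c \<circ> word_perm p)" by (rule comp_assoc)
  also have "\<dots> = sigma d \<circ> (word_perm p \<circ> sigma c)" by (simp only: h2)
  also have "\<dots> = (sigma d \<circ> word_perm p) \<circ> sigma c" by (rule comp_assoc[symmetric])
  finally show ?case by (simp only: word_perm_Cons)
qed

fun good :: "nat set \<Rightarrow> nat set \<Rightarrow> nat list \<Rightarrow> bool" where
  "good X Y [] = True"
| "good X Y (c # t) = (good X Y t \<and> (c \<in> Y \<longrightarrow> (\<forall>x\<in>set t. x \<in> X \<longrightarrow> x \<noteq> Suc c \<and> c \<noteq> Suc x)))"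

lemma factor:
  assumes "good X Y t" "set t \<subseteq> X \<union> Y" "X \<inter> Y = {}"
  shows "word_perm t = word_perm (filter (\<lambda>a. a \<in> X) t) \<circ> word_perm (filter (\<lambda>a. a \<in> Y) t)"
  using assms
proof (induction t)
  case Nil
  show ?case by simp
next
  case (Cons c t)
  have IH: "word_perm t = word_perm (filter (\<lambda>a. a \<in> X) t) \<circ> word_perm (filter (\<lambda>a. a \<in> Y) t)"
    by (rule Cons.IH) (use Cons.prems in auto)
  show ?case
  proof (cases "c \<in> X")
    case True
    then have "c \<notin> Y" using Cons.prems(3) by blast
    have "word_perm (c # t) = sigma c \<circ> (word_perm (filter (\<lambda>a. a \<in> X) t) \<circ> word_perm (filter (\<lambda>a. a \<in> Y) t))"
      using IH by (simp only: word_perm_Cons)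
    also have "\<dots> = (sigma c \<circ> word_perm (filter (\<lambda>a. a \<in> X) t)) \<circ> word_perm (filter (\<lambda>a. a \<in> Y) t)"
      by (rule comp_assoc[symmetric])
    finally show ?thesis using True \<open>c \<notin> Y\<close> by simp
  next
    case False
    then have cY: "c \<in> Y" using Cons.prems(2) by simp
    have "\<forall>x\<in>set (filter (\<lambda>a. a \<in> X) t). x \<noteq> c \<and> x \<noteq> Suc c \<and> c \<noteq> Suc x"
      using Cons.prems cY False by auto
    then have cm: "sigma c \<circ> word_perm (filter (\<lambda>a. a \<in> X) t) = word_perm (filter (\<lambda>a. a \<in> X) t) \<circ> sigma c"
      by (rule comm_word)
    have "word_perm (c # t) = sigma c \<circ> word_perm (filter (\<lambda>a. a \<in> X) t) \<circ> word_perm (filter (\<lambda>a. a \<in> Y) t)"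
      using IH by (simp only: word_perm_Cons comp_assoc)
    also have "\<dots> = word_perm (filter (\<lambda>a. a \<in> X) t) \<circ> (sigma c \<circ> word_perm (filter (\<lambda>a. a \<in> Y) t))"
      by (simp only: cm o_assoc)
    finally show ?thesis using cY False by simp
  qed
qed

lemma good_case1:
  assumes "\<forall>x\<in>X. \<forall>y\<in>Y. x \<noteq> Suc y \<and> y \<noteq> Suc x"
  shows "good X Y t"
  using assms by (induction t) auto

lemma good_case2:
  assumes "\<forall>i j. i < length t \<longrightarrow> j < length t \<longrightarrow> t ! i = x0 \<longrightarrow> t ! j = y0 \<longrightarrow> i < j"
    and "\<forall>x y. x \<in> X \<longrightarrow> y \<in> Y \<longrightarrow> (x = Suc y \<or> y = Suc x) \<longrightarrow> x = x0 \<and> y = y0"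
  shows "good X Y t"
  using assms(1)
proof (induction t)
  case Nil
  show ?case by simp
next
  case (Cons c t)
  have "\<forall>i j. i < length t \<longrightarrow> j < length t \<longrightarrow> t ! i = x0 \<longrightarrow> t ! j = y0 \<longrightarrow> i < j"
  proof (intro allI impI)
    fix i j assume "i < length t" "j < length t" "t ! i = x0" "t ! j = y0"
    then have "Suc i < Suc j" using Cons.prems[rule_format, of "Suc i" "Suc j"] by simp
    then show "i < j" by simp
  qed
  then have g: "good X Y t" by (rule Cons.IH)
  have "\<forall>x\<in>set t. x \<in> X \<longrightarrow> x \<noteq> Suc c \<and> c \<noteq> Suc x" if cY: "c \<in> Y"
  proof (intro ballI impI)
    fix x assume x: "x \<in> set t" "x \<in> X"
    show "x \<noteq> Suc c \<and> c \<noteq> Suc x"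
    proof (rule ccontr)
      assume "\<not> (x \<noteq> Suc c \<and> c \<noteq> Suc x)"
      then have "x = x0 \<and> c = y0" using assms(2) x cY by blast
      moreover obtain j where j: "j < length t" "t ! j = x" using x(1) by (metis in_set_conv_nth)
      ultimately have "(c # t) ! Suc j = x0" "(c # t) ! 0 = y0" by simp_all
      then have "Suc j < 0" using Cons.prems[rule_format, of "Suc j" 0] j by simp
      then show False by simp
    qed
  qed
  then show ?case using g by simp
qed


lemma reduced_concat:
  assumes "reduced_word n p" "reduced_word n q" "set p \<subseteq> X" "set q \<subseteq> Y" "X \<inter> Y = {}"
  shows "reduced_word n (p @ q)"
proof (rule ccontr)
  assume nr: "\<not> reduced_word n (p @ q)"
  have vp: "valid_word n p" and vq: "valid_word n q" using assms(1,2) unfolding reduced_word_def by simp_all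
  have v: "valid_word n (p @ q)" using vp vq by simp
  obtain r where r: "sub r (p @ q)" "length r < length (p @ q)" "word_perm r = word_perm (p @ q)"
    using shorter[OF v nr] by blast
  obtain p1 q1 where pq: "r = p1 @ q1" "sub p1 p" "sub q1 q" using sub_append_split[OF r(1)] by blast
  have eq: "word_perm p1 \<circ> word_perm q1 = word_perm p \<circ> word_perm q"
    using r(3) unfolding pq(1) word_perm_append .
  have s1: "set p1 \<subseteq> X" using sub_set[OF pq(2)] assms(3) by blast
  have s2: "set q1 \<subseteq> Y" using sub_set[OF pq(3)] assms(4) by blast
  have e: "word_perm p1 = word_perm p \<and> word_perm q1 = word_perm q"
    by (rule unique_fact[OF s1 assms(3) s2 assms(4) assms(5) eq])
  have "perm_length n (word_perm p1) \<le> length p1" by (rule pl_le[OF valid_sub[OF pq(2) vp]])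
  moreover have "perm_length n (word_perm q1) \<le> length q1" by (rule pl_le[OF valid_sub[OF pq(3) vq]])
  moreover have "length p = perm_length n (word_perm p)" using assms(1) unfolding reduced_word_def by simp
  moreover have "length q = perm_length n (word_perm q)" using assms(2) unfolding reduced_word_def by simp
  ultimately have "length p + length q \<le> length p1 + length q1" using e by simp
  then show False using r(2) pq(1) by simp
qed

theorem lemma3p2:
  fixes n :: nat and w :: "nat \<Rightarrow> nat" and X Y :: "nat set" and s :: "nat list"
  assumes w: "w permutes {1..n}"
    and XY: "supp n w = X \<union> Y" "X \<inter> Y = {}"
    and s: "reduced_word n s" "word_perm s = w"
    and cases: "(\<forall>x\<in>X. \<forall>y\<in>Y. x \<noteq> Suc y \<and> y \<noteq> Suc x)
       \<or> (\<exists>x0 y0. {(x, y). x \<in> X \<and> y \<in> Y \<and> (x = Suc y \<or> y = Suc x)} = {(x0, y0)}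
            \<and> (\<forall>i j. i < length s \<longrightarrow> j < length s \<longrightarrow> s ! i = x0 \<longrightarrow> s ! j = y0 \<longrightarrow> i < j))"
  shows "reduced_word n (filter (\<lambda>a. a \<in> X) s) \<and> reduced_word n (filter (\<lambda>a. a \<in> Y) s)
    \<and> (\<exists>f. bij_betw f (bruhat_ideal n w)
              (bruhat_ideal n (word_perm (filter (\<lambda>a. a \<in> X) s))
                \<times> bruhat_ideal n (word_perm (filter (\<lambda>a. a \<in> Y) s)))
         \<and> (\<forall>u\<in>bruhat_ideal n w. \<forall>v\<in>bruhat_ideal n w.
              bruhat_le n u v \<longleftrightarrow>
                (bruhat_le n (fst (f u)) (fst (f v)) \<and> bruhat_le n (snd (f u)) (snd (f v)))))"
proof -
  define sX where "sX = filter (\<lambda>a. a \<in> X) s"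
  define sY where "sY = filter (\<lambda>a. a \<in> Y) s"
  define A where "A = word_perm sX"
  define B where "B = word_perm sY"
  have vs: "valid_word n s" using s(1) unfolding reduced_word_def by simp
  have sS: "set s \<subseteq> X \<union> Y"
  proof
    fix a assume "a \<in> set s"
    then have "a \<in> supp n w" unfolding supp_def using s by blast
    then show "a \<in> X \<union> Y" using XY(1) by simp
  qed
  have gd: "good X Y s"
    using cases
  proof
    assume "\<forall>x\<in>X. \<forall>y\<in>Y. x \<noteq> Suc y \<and> y \<noteq> Suc x"
    then show ?thesis by (rule good_case1)
  next
    assume "\<exists>x0 y0. {(x, y). x \<in> X \<and> y \<in> Y \<and> (x = Suc y \<or> y = Suc x)} = {(x0, y0)}
            \<and> (\<forall>i j. i < length s \<longrightarrow> j < length s \<longrightarrow> s ! i = x0 \<longrightarrow> s ! j = y0 \<longrightarrow> i < j)"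
    then obtain x0 y0 where E: "{(x, y). x \<in> X \<and> y \<in> Y \<and> (x = Suc y \<or> y = Suc x)} = {(x0, y0)}"
      and I: "\<forall>i j. i < length s \<longrightarrow> j < length s \<longrightarrow> s ! i = x0 \<longrightarrow> s ! j = y0 \<longrightarrow> i < j"
      by blast
    have "\<forall>x y. x \<in> X \<longrightarrow> y \<in> Y \<longrightarrow> (x = Suc y \<or> y = Suc x) \<longrightarrow> x = x0 \<and> y = y0"
    proof (intro allI impI)
      fix x y assume "x \<in> X" "y \<in> Y" "x = Suc y \<or> y = Suc x"
      then have "(x, y) \<in> {(x, y). x \<in> X \<and> y \<in> Y \<and> (x = Suc y \<or> y = Suc x)}" by simp
      then show "x = x0 \<and> y = y0" using E by simp
    qed
    then show ?thesis by (rule good_case2[OF I])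
  qed
  have wf: "w = A \<circ> B"
    using factor[OF gd sS XY(2)] unfolding s(2) A_def B_def sX_def sY_def .
  have vX: "valid_word n sX" unfolding sX_def by (rule valid_sub[OF sub_filter_self vs])
  have vY: "valid_word n sY" unfolding sY_def by (rule valid_sub[OF sub_filter_self vs])
  have setX: "set sX \<subseteq> X" unfolding sX_def by auto
  have setY: "set sY \<subseteq> Y" unfolding sY_def by auto
  have len: "length sX + length sY = length s"
  proof -
    have "filter (\<lambda>a. a \<in> Y) s = filter (\<lambda>a. \<not> (a \<in> X)) s"
      by (rule filter_cong[OF refl]) (use sS XY(2) in auto)
    then show ?thesis using sum_length_filter_compl[of "\<lambda>a. a \<in> X" s] unfolding sX_def sY_def by simp
  qed
  have plw: "perm_length n w = length s" using s unfolding reduced_word_def by simp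
  have plA: "perm_length n A \<le> length sX" unfolding A_def by (rule pl_le[OF vX])
  have plB: "perm_length n B \<le> length sY" unfolding B_def by (rule pl_le[OF vY])
  obtain rA where rA: "valid_word n rA" "word_perm rA = A" "length rA = perm_length n A"
    using pl_ex[OF vX] unfolding A_def by blast
  obtain rB where rB: "valid_word n rB" "word_perm rB = B" "length rB = perm_length n B"
    using pl_ex[OF vY] unfolding B_def by blast
  have "valid_word n (rA @ rB)" using rA rB by simp
  then have "perm_length n (word_perm (rA @ rB)) \<le> length (rA @ rB)" by (rule pl_le)
  moreover have "word_perm (rA @ rB) = w" by (simp only: word_perm_append rA(2) rB(2) wf)
  ultimately have "perm_length n w \<le> perm_length n A + perm_length n B" using rA rB by simp
  then have eqA: "length sX = perm_length n A" and eqB: "length sY = perm_length n B"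
    using plA plB len plw by linarith+
  have redX: "reduced_word n sX" unfolding reduced_word_def using vX eqA A_def by simp
  have redY: "reduced_word n sY" unfolding reduced_word_def using vY eqB B_def by simp
  have vs': "valid_word n (sX @ sY)" using vX vY by simp
  have ws': "word_perm (sX @ sY) = w" by (simp only: word_perm_append A_def[symmetric] B_def[symmetric] wf)
  have red': "reduced_word n (sX @ sY)" unfolding reduced_word_def using vs' ws' plw len by simp

  define BA where "BA = bruhat_ideal n A"
  define BB where "BB = bruhat_ideal n B"
  define BW where "BW = bruhat_ideal n w"
  have F1X: "\<exists>p. sub p sX \<and> word_perm p = a" if "a \<in> BA" for a
    using that le_subword[OF _ vX A_def[symmetric]] unfolding BA_def bruhat_ideal_def by blast
  have F1Y: "\<exists>p. sub p sY \<and> word_perm p = a" if "a \<in> BB" for a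
    using that le_subword[OF _ vY B_def[symmetric]] unfolding BB_def bruhat_ideal_def by blast
  have F2X: "\<exists>p. set p \<subseteq> X \<and> reduced_word n p \<and> word_perm p = a" if aA: "a \<in> BA" for a
  proof -
    obtain p where p: "sub p sX" "word_perm p = a" using F1X[OF aA] by blast
    have "valid_word n p" by (rule valid_sub[OF p(1) vX])
    then obtain r where r: "sub r p" "reduced_word n r" "word_perm r = word_perm p" using deletion by blast
    have "set r \<subseteq> X" using sub_set[OF r(1)] sub_set[OF p(1)] setX by blast
    moreover have "word_perm r = a" using r(3) p(2) by simp
    ultimately show ?thesis using r(2) by blast
  qed
  have F2Y: "\<exists>p. set p \<subseteq> Y \<and> reduced_word n p \<and> word_perm p = a" if aB: "a \<in> BB" for a
  proof -
    obtain p where p: "sub p sY" "word_perm p = a" using F1Y[OF aB] by blast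
    have "valid_word n p" by (rule valid_sub[OF p(1) vY])
    then obtain r where r: "sub r p" "reduced_word n r" "word_perm r = word_perm p" using deletion by blast
    have "set r \<subseteq> Y" using sub_set[OF r(1)] sub_set[OF p(1)] setY by blast
    moreover have "word_perm r = a" using r(3) p(2) by simp
    ultimately show ?thesis using r(2) by blast
  qed
  have F4X: "word_perm p \<in> BA" if "sub p sX" for p
    unfolding BA_def bruhat_ideal_def A_def
    using word_perm_permutes[OF valid_sub[OF that vX]] subword_le[OF redX that] by blast
  have F4Y: "word_perm p \<in> BB" if "sub p sY" for p
    unfolding BB_def bruhat_ideal_def B_def
    using word_perm_permutes[OF valid_sub[OF that vY]] subword_le[OF redY that] by blast
  have F5: "word_perm p \<circ> word_perm q \<in> BW" if "sub p sX" "sub q sY" for p q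
  proof -
    have sp: "sub (p @ q) (sX @ sY)" by (rule sub_append[OF that])
    have "word_perm (p @ q) permutes {1..n}" by (rule word_perm_permutes[OF valid_sub[OF sp vs']])
    moreover have "bruhat_le n (word_perm (p @ q)) w" using subword_le[OF red' sp] unfolding ws' .
    ultimately show ?thesis unfolding BW_def bruhat_ideal_def word_perm_append by blast
  qed
  have F3: "\<exists>p q. sub p sX \<and> sub q sY \<and> u = word_perm p \<circ> word_perm q" if "u \<in> BW" for u
  proof -
    have "bruhat_le n u w" using that unfolding BW_def bruhat_ideal_def by blast
    then obtain t where t: "sub t (sX @ sY)" "word_perm t = u" using le_subword[OF _ vs' ws'] by blast
    obtain p q where pq: "t = p @ q" "sub p sX" "sub q sY" using sub_append_split[OF t(1)] by blast
    have "u = word_perm p \<circ> word_perm q" using t(2) unfolding pq(1) word_perm_append by simp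
    then show ?thesis using pq(2,3) by blast
  qed
  have ord: "bruhat_le n (a \<circ> b) (a' \<circ> b') \<longleftrightarrow> bruhat_le n a a' \<and> bruhat_le n b b'"
    if ab: "a \<in> BA" "b \<in> BB" "a' \<in> BA" "b' \<in> BB" for a b a' b'
  proof -
    obtain p where p: "sub p sX" "word_perm p = a" using F1X[OF ab(1)] by blast
    obtain q where q: "sub q sY" "word_perm q = b" using F1Y[OF ab(2)] by blast
    obtain p' where p': "set p' \<subseteq> X" "reduced_word n p'" "word_perm p' = a'" using F2X[OF ab(3)] by blast
    obtain q' where q': "set q' \<subseteq> Y" "reduced_word n q'" "word_perm q' = b'" using F2Y[OF ab(4)] by blast
    have setp: "set p \<subseteq> X" using sub_set[OF p(1)] setX by blast
    have setq: "set q \<subseteq> Y" using sub_set[OF q(1)] setY by blast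
    have vp': "valid_word n p'" using p'(2) unfolding reduced_word_def by simp
    have vq': "valid_word n q'" using q'(2) unfolding reduced_word_def by simp
    have red: "reduced_word n (p' @ q')" by (rule reduced_concat[OF p'(2) q'(2) p'(1) q'(1) XY(2)])
    have vpq: "valid_word n (p' @ q')" using vp' vq' by simp
    have wpq: "word_perm (p' @ q') = a' \<circ> b'" by (simp only: word_perm_append p'(3) q'(3))
    show ?thesis
    proof
      assume le: "bruhat_le n (a \<circ> b) (a' \<circ> b')"
      obtain t where t: "sub t (p' @ q')" "word_perm t = a \<circ> b" using le_subword[OF le vpq wpq] by blast
      obtain p1 q1 where pq: "t = p1 @ q1" "sub p1 p'" "sub q1 q'" using sub_append_split[OF t(1)] by blast
      have eq: "word_perm p1 \<circ> word_perm q1 = word_perm p \<circ> word_perm q"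
        using t(2) unfolding pq(1) word_perm_append p(2) q(2) .
      have s1: "set p1 \<subseteq> X" using sub_set[OF pq(2)] p'(1) by blast
      have s2: "set q1 \<subseteq> Y" using sub_set[OF pq(3)] q'(1) by blast
      have e: "word_perm p1 = word_perm p \<and> word_perm q1 = word_perm q"
        by (rule unique_fact[OF s1 setp s2 setq XY(2) eq])
      have "bruhat_le n (word_perm p1) (word_perm p')" by (rule subword_le[OF p'(2) pq(2)])
      moreover have "bruhat_le n (word_perm q1) (word_perm q')" by (rule subword_le[OF q'(2) pq(3)])
      ultimately show "bruhat_le n a a' \<and> bruhat_le n b b'" using e p(2) q(2) p'(3) q'(3) by simp
    next
      assume le: "bruhat_le n a a' \<and> bruhat_le n b b'"
      obtain p1 where p1: "sub p1 p'" "word_perm p1 = a" using le_subword[OF conjunct1[OF le] vp' p'(3)] by blast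
      obtain q1 where q1: "sub q1 q'" "word_perm q1 = b" using le_subword[OF conjunct2[OF le] vq' q'(3)] by blast
      have "bruhat_le n (word_perm (p1 @ q1)) (word_perm (p' @ q'))"
        by (rule subword_le[OF red sub_append[OF p1(1) q1(1)]])
      then show "bruhat_le n (a \<circ> b) (a' \<circ> b')" unfolding word_perm_append p1(2) q1(2) p'(3) q'(3) .
    qed
  qed
  define g where "g = (\<lambda>(a :: nat \<Rightarrow> nat, b :: nat \<Rightarrow> nat). a \<circ> b)"
  have inj: "inj_on g (BA \<times> BB)"
  proof (rule inj_onI)
    fix x y assume x: "x \<in> BA \<times> BB" and y: "y \<in> BA \<times> BB" and gxy: "g x = g y"
    obtain a b where xab: "x = (a, b)" by (cases x)
    obtain a' b' where yab: "y = (a', b')" by (cases y)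
    obtain p where p: "sub p sX" "word_perm p = a" using F1X x xab by blast
    obtain q where q: "sub q sY" "word_perm q = b" using F1Y x xab by blast
    obtain p' where p': "sub p' sX" "word_perm p' = a'" using F1X y yab by blast
    obtain q' where q': "sub q' sY" "word_perm q' = b'" using F1Y y yab by blast
    have eq: "word_perm p \<circ> word_perm q = word_perm p' \<circ> word_perm q'"
      using gxy unfolding xab yab g_def p(2) q(2) p'(2) q'(2) by simp
    have "word_perm p = word_perm p' \<and> word_perm q = word_perm q'"
      by (rule unique_fact[OF _ _ _ _ XY(2) eq])
        (use sub_set[OF p(1)] sub_set[OF q(1)] sub_set[OF p'(1)] sub_set[OF q'(1)] setX setY in blast)+
    then show "x = y" unfolding xab yab using p(2) q(2) p'(2) q'(2) by simp
  qed
  have img: "g ` (BA \<times> BB) = BW"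
  proof
    show "g ` (BA \<times> BB) \<subseteq> BW"
    proof
      fix u assume "u \<in> g ` (BA \<times> BB)"
      then obtain a b where ab: "a \<in> BA" "b \<in> BB" "u = a \<circ> b" unfolding g_def by auto
      obtain p where p: "sub p sX" "word_perm p = a" using F1X[OF ab(1)] by blast
      obtain q where q: "sub q sY" "word_perm q = b" using F1Y[OF ab(2)] by blast
      show "u \<in> BW" using F5[OF p(1) q(1)] unfolding ab(3) p(2) q(2) .
    qed
  next
    show "BW \<subseteq> g ` (BA \<times> BB)"
    proof
      fix u assume "u \<in> BW"
      then obtain p q where pq: "sub p sX" "sub q sY" "u = word_perm p \<circ> word_perm q" using F3 by blast
      have "(word_perm p, word_perm q) \<in> BA \<times> BB" using F4X[OF pq(1)] F4Y[OF pq(2)] by simp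
      moreover have "u = g (word_perm p, word_perm q)" unfolding g_def using pq(3) by simp
      ultimately show "u \<in> g ` (BA \<times> BB)" by (rule rev_image_eqI)
    qed
  qed
  have bij: "bij_betw g (BA \<times> BB) BW" unfolding bij_betw_def using inj img by blast
  define f where "f = the_inv_into (BA \<times> BB) g"
  have bijf: "bij_betw f BW (BA \<times> BB)" unfolding f_def by (rule bij_betw_the_inv_into[OF bij])
  have gf: "g (f u) = u" if "u \<in> BW" for u
    unfolding f_def by (rule f_the_inv_into_f_bij_betw[OF bij that])
  have fin: "f u \<in> BA \<times> BB" if "u \<in> BW" for u
    by (rule bij_betw_apply[OF bijf that])
  have ordf: "bruhat_le n u v \<longleftrightarrow> (bruhat_le n (fst (f u)) (fst (f v)) \<and> bruhat_le n (snd (f u)) (snd (f v)))"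
    if uv: "u \<in> BW" "v \<in> BW" for u v
  proof -
    obtain a b where ab: "f u = (a, b)" by (cases "f u")
    obtain a' b' where ab': "f v = (a', b')" by (cases "f v")
    have m: "a \<in> BA" "b \<in> BB" using fin[OF uv(1)] ab by auto
    have m': "a' \<in> BA" "b' \<in> BB" using fin[OF uv(2)] ab' by auto
    have u: "u = a \<circ> b" using gf[OF uv(1)] ab unfolding g_def by simp
    have v: "v = a' \<circ> b'" using gf[OF uv(2)] ab' unfolding g_def by simp
    have "bruhat_le n u v \<longleftrightarrow> bruhat_le n a a' \<and> bruhat_le n b b'" unfolding u v by (rule ord[OF m m'])
    then show ?thesis unfolding ab ab' fst_conv snd_conv .
  qed
  have main: "\<exists>f. bij_betw f BW (BA \<times> BB)
         \<and> (\<forall>u\<in>BW. \<forall>v\<in>BW.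
              bruhat_le n u v \<longleftrightarrow>
                (bruhat_le n (fst (f u)) (fst (f v)) \<and> bruhat_le n (snd (f u)) (snd (f v))))"
    using bijf ordf by blast
  show ?thesis
    using redX redY main unfolding sX_def sY_def BA_def BB_def BW_def A_def B_def by blast
qed

end
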